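(* At the ice point $t=1$, $\Delta=1/2$, let $N\ge1$, $1\le s\le N$, and $r=N-s$. Define $$\mathcal J(z_1,\dots,z_s)=\prod_{j=1}^{s}\frac{z_j^{s-j}}{z_j^{s}(z_j-1)^{s-j+1}}\prod_{1\le j<k\le s}\frac{z_j-z_k}{1- z_k+z_jz_k}\;h_{N,s}(z_1,\dots,z_s).$$ Then the iterated residue at $z=0$ (taken first in $z_s$, ..., finally in $z_1$) is $$\operatorname*{res}_{z_1=0}\cdots\operatorname*{res}_{z_s=0}\mathcal J(z_1,\dots,z_s)=(-1)^s\,h_N(0)\,h_{N-1}(0)\cdots h_{N-s+1}(0).$$
   Context: At the ice point, for $N\ge1$, $h_N(z)={}_2F_1(-N+1,N;2N;1-z)=\sum_{r=1}^N H_N^{(r)}z^{r-1}$, where $H_N^{(r)}=\binom{N+r-2}{N-1}\binom{2N-1-r}{N-1}\big/\binom{3N-2}{N-1}$; it is a polynomial of degree $N-1$ with $h_N(1)=1$ and $z^{N-1}h_N(1/z)=h_N(z)$. For $1\le s\le N$, $$h_{N,s}(z_1,\dots,z_s)=\frac{\det\big[(z_j-1)^{s-i}z_j^{i-1}h_{N-i+1}(z_j)\big]_{i,j=1}^{s}}{\prod_{1\le i<j\le s}(z_i-z_j)}.$$ *)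

theory Defs
  imports "HOL-Complex_Analysis.Complex_Analysis" "Jordan_Normal_Form.Determinant"
begin

text \<open>Coefficients H_N^(r) at the ice point.\<close>
definition Hcoef :: "nat \<Rightarrow> nat \<Rightarrow> complex" where
  "Hcoef N r = of_nat ((N + r - 2) choose (N - 1)) * of_nat ((2*N - 1 - r) choose (N - 1))
               / of_nat ((3*N - 2) choose (N - 1))"

definition hN :: "nat \<Rightarrow> complex \<Rightarrow> complex" where
  "hN N z = (\<Sum>r = 1..N. Hcoef N r * z ^ (r - 1))"

text \<open>h_{N,s}(z_1,...,z_s); variables z 1, ..., z s (1-indexed). The matrix is
  0-indexed in Jordan_Normal_Form: entry (i,j) corresponds to row i+1, column j+1.\<close>
definition hNs :: "nat \<Rightarrow> nat \<Rightarrow> (nat \<Rightarrow> complex) \<Rightarrow> complex" where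
  "hNs N s z =
     det (mat s s (\<lambda>(i, j). (z (j+1) - 1) ^ (s - (i+1)) * z (j+1) ^ i * hN (N - i) (z (j+1))))
     / (\<Prod>i = 1..s. \<Prod>j = i+1..s. (z i - z j))"

definition Jfun :: "nat \<Rightarrow> nat \<Rightarrow> (nat \<Rightarrow> complex) \<Rightarrow> complex" where
  "Jfun N s z =
     (\<Prod>j = 1..s. z j ^ (s - j) / (z j ^ s * (z j - 1) ^ (s - j + 1)))
   * (\<Prod>j = 1..s. \<Prod>k = j+1..s. (z j - z k) / (1 - z k + z j * z k))
   * hNs N s z"

definition res_var :: "nat \<Rightarrow> ((nat \<Rightarrow> complex) \<Rightarrow> complex) \<Rightarrow> (nat \<Rightarrow> complex) \<Rightarrow> complex" where
  "res_var j F = (\<lambda>z. residue (\<lambda>w. F (z(j := w))) 0)"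

fun ires :: "nat \<Rightarrow> ((nat \<Rightarrow> complex) \<Rightarrow> complex) \<Rightarrow> (nat \<Rightarrow> complex) \<Rightarrow> complex" where
  "ires 0 F = F"
| "ires (Suc k) F = ires k (res_var (Suc k) F)"

end

theory Submission
  imports Defs
begin

definition cf :: "complex \<Rightarrow> complex \<Rightarrow> complex" where
  "cf u w = 1 / (1 - w + u * w)"

definition cross :: "nat \<Rightarrow> (nat \<Rightarrow> complex) \<Rightarrow> complex" where
  "cross k z = (\<Prod>j=1..k. \<Prod>l=j+1..k. cf (z j) (z l))"

definition CC :: "nat \<Rightarrow> (nat \<Rightarrow> complex) \<Rightarrow> complex \<Rightarrow> complex" where
  "CC k z w = (\<Prod>j=1..k. cf (z j) w)"

definition RES :: "nat \<Rightarrow> ((nat \<Rightarrow> complex) \<Rightarrow> complex) \<Rightarrow> (nat \<Rightarrow> complex) \<Rightarrow> complex" where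
  "RES k F = (\<lambda>z. residue (\<lambda>w. F (z(k:=w)) * CC (k-1) z w) 0)"

fun RESR :: "nat \<Rightarrow> nat \<Rightarrow> ((nat \<Rightarrow> complex) \<Rightarrow> complex) \<Rightarrow> (nat \<Rightarrow> complex) \<Rightarrow> complex" where
  "RESR m 0 F = F"
| "RESR m (Suc k) F = (if Suc k \<le> m then F else RESR m k (RES (Suc k) F))"

fun iresR :: "nat \<Rightarrow> nat \<Rightarrow> ((nat \<Rightarrow> complex) \<Rightarrow> complex) \<Rightarrow> (nat \<Rightarrow> complex) \<Rightarrow> complex" where
  "iresR m 0 F = F"
| "iresR m (Suc k) F = (if Suc k \<le> m then F else iresR m k (res_var (Suc k) F))"

definition good :: "nat \<Rightarrow> (complex \<Rightarrow> complex) \<Rightarrow> bool" where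
  "good K g \<longleftrightarrow> (\<exists>U \<phi>. open U \<and> 0 \<in> U \<and> \<phi> holomorphic_on U \<and> (\<forall>x\<in>U-{0}. g x = \<phi> x / x ^ K))"

definition okP :: "(nat \<Rightarrow> (complex \<Rightarrow> complex) \<Rightarrow> bool) \<Rightarrow> bool" where
  "okP P \<longleftrightarrow> (\<forall>j g. P j g \<longrightarrow> (\<exists>K. good K g)) \<and> (\<forall>j g e. P j g \<longrightarrow> P j (\<lambda>x. g x * (1 - x) ^ e))"

inductive sep :: "(nat \<Rightarrow> (complex \<Rightarrow> complex) \<Rightarrow> bool) \<Rightarrow> nat \<Rightarrow> ((nat \<Rightarrow> complex) \<Rightarrow> complex) \<Rightarrow> bool"
  for P k where
  zero: "sep P k (\<lambda>z. 0)"
| prod: "(\<And>j. j \<in> {1..k} \<Longrightarrow> P j (g j)) \<Longrightarrow> sep P k (\<lambda>z. a * (\<Prod>j=1..k. g j (z j)))"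
| add: "sep P k F \<Longrightarrow> sep P k G \<Longrightarrow> sep P k (\<lambda>z. F z + G z)"

lemma sep_cmult: "sep P k F \<Longrightarrow> sep P k (\<lambda>z. c * F z)"
proof (induction rule: sep.induct)
  case zero then show ?case using sep.zero by simp
next
  case (prod g a)
  have "sep P k (\<lambda>z. (c * a) * (\<Prod>j=1..k. g j (z j)))" by (rule sep.prod) (use prod in auto)
  then show ?case by (simp add: mult.assoc)
next
  case (add F G)
  then show ?case using sep.add[of P k "\<lambda>z. c * F z" "\<lambda>z. c * G z"] by (simp add: distrib_left)
qed

lemma sep_sum: "finite I \<Longrightarrow> (\<And>i. i \<in> I \<Longrightarrow> sep P k (T i)) \<Longrightarrow> sep P k (\<lambda>z. \<Sum>i\<in>I. T i z)"
proof (induction I rule: finite_induct)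
  case empty then show ?case using sep.zero by simp
next
  case (insert x F)
  then show ?case using sep.add[of P k "T x" "\<lambda>z. \<Sum>i\<in>F. T i z"] by simp
qed

lemma good_holo:
  assumes "good K g" obtains U where "open U" "0 \<in> U" "g holomorphic_on U - {0}"
proof -
  from assms obtain U \<phi> where U: "open U" "0 \<in> U" "\<phi> holomorphic_on U" "\<forall>x\<in>U-{0}. g x = \<phi> x / x ^ K"
    unfolding good_def by blast
  have "(\<lambda>x. \<phi> x / x ^ K) holomorphic_on U - {0}"
    using U by (intro holomorphic_intros) (auto intro: holomorphic_on_subset)
  also have "?this \<longleftrightarrow> g holomorphic_on U - {0}" using U(4) by (intro holomorphic_cong) auto
  finally show ?thesis using that U by blast
qed

lemma okP_good: "okP P \<Longrightarrow> P j g \<Longrightarrow> \<exists>K. good K g" unfolding okP_def by blast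
lemma okP_mult: "okP P \<Longrightarrow> P j g \<Longrightarrow> P j (\<lambda>x. g x * (1 - x) ^ e)" unfolding okP_def by blast

lemma sep_holo:
  assumes "okP P" "sep P k F" "i \<in> {1..k}"
  shows "\<exists>U. open U \<and> 0 \<in> U \<and> (\<lambda>w. F (z(i:=w))) holomorphic_on U - {0}"
  using assms(2)
proof (induction rule: sep.induct)
  case zero then show ?case by (intro exI[of _ UNIV]) (auto intro: holomorphic_intros)
next
  case (prod g a)
  obtain K where "good K (g i)" using okP_good[OF assms(1) prod[OF assms(3)]] by blast
  then obtain U where U: "open U" "0 \<in> U" "g i holomorphic_on U - {0}" by (rule good_holo)
  have "(\<lambda>w. a * (\<Prod>j=1..k. g j ((z(i:=w)) j))) holomorphic_on U - {0}"
  proof (intro holomorphic_intros)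
    fix j assume "j \<in> {1..k}"
    show "(\<lambda>w. g j ((z(i:=w)) j)) holomorphic_on U - {0}"
    proof (cases "j = i")
      case True then show ?thesis using U by simp
    next
      case False then show ?thesis by (simp add: holomorphic_on_const)
    qed
  qed
  then show ?case using U by blast
next
  case (add F G)
  then obtain U1 U2 where U: "open U1" "0 \<in> U1" "(\<lambda>w. F (z(i:=w))) holomorphic_on U1 - {0}"
     "open U2" "0 \<in> U2" "(\<lambda>w. G (z(i:=w))) holomorphic_on U2 - {0}" by blast
  have "(\<lambda>w. F (z(i:=w)) + G (z(i:=w))) holomorphic_on U1 \<inter> U2 - {0}"
    by (intro holomorphic_on_add holomorphic_on_subset[OF U(3)] holomorphic_on_subset[OF U(6)]) auto
  then show ?case using U(1,2,4,5) by (intro exI[of _ "U1 \<inter> U2"] conjI open_Int IntI) (assumption)+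
qed

definition Geo :: "complex \<Rightarrow> complex fps" where "Geo a = Abs_fps (\<lambda>n. a ^ n)"

lemma Geo_inv: "(1 - fps_const a * fps_X) * Geo a = 1"
proof (rule fps_ext)
  fix n
  show "((1 - fps_const a * fps_X) * Geo a) $ n = (1::complex fps) $ n"
    by (cases n) (simp_all add: algebra_simps mult.assoc fps_X_mult_nth Geo_def)
qed

lemma cf_fps: "(\<lambda>w. cf u w) has_fps_expansion Geo (1 - u)"
proof -
  have "(\<lambda>w. 1 - (1 - u) * w) has_fps_expansion 1 - fps_const (1 - u) * fps_X"
    by (intro fps_expansion_intros)
  then have "(\<lambda>w. inverse (1 - (1 - u) * w)) has_fps_expansion inverse (1 - fps_const (1 - u) * fps_X)"
    by (intro has_fps_expansion_inverse) auto
  also have "inverse (1 - fps_const (1 - u) * fps_X) = Geo (1 - u)"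
    by (rule fps_inverse_unique[OF Geo_inv])
  also have "(\<lambda>w. inverse (1 - (1 - u) * w)) = (\<lambda>w. cf u w)"
    by (auto simp: cf_def divide_inverse algebra_simps)
  finally show ?thesis .
qed

lemma CC_fps: "(\<lambda>w. CC k z w) has_fps_expansion (\<Prod>j=1..k. Geo (1 - z j))"
  unfolding CC_def by (intro has_fps_expansion_prod cf_fps)

lemma CC_holo: "\<exists>U. open U \<and> 0 \<in> U \<and> (\<lambda>w. CC k z w) holomorphic_on U"
proof -
  let ?U = "\<Inter>j\<in>{1..k}. {w. 1 - w + z j * w \<noteq> 0}"
  have "open ?U"
    by (intro open_INT ballI open_Collect_neq) (auto intro!: continuous_intros)
  moreover have "(\<lambda>w. CC k z w) holomorphic_on ?U"
    unfolding CC_def cf_def by (intro holomorphic_intros) auto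
  ultimately show ?thesis by (intro exI[of _ ?U]) auto
qed

lemma prod_slice:
  fixes k :: nat
  assumes "1 \<le> k"
  shows "(\<Prod>j=1..k. g j ((z(k:=w)) j)) = (\<Prod>j=1..k-1. g j (z j)) * g k w"
proof -
  obtain k' where k: "k = Suc k'" using assms by (cases k) auto
  have "(\<Prod>j=1..Suc k'. g j ((z(Suc k':=w)) j)) = (\<Prod>j=1..k'. g j ((z(Suc k':=w)) j)) * g (Suc k') w"
    by (simp add: prod.cl_ivl_Suc)
  also have "(\<Prod>j=1..k'. g j ((z(Suc k':=w)) j)) = (\<Prod>j=1..k'. g j (z j))"
    by (intro prod.cong) auto
  finally show ?thesis using k by simp
qed

lemma slice_holo:
  assumes "okP P" "1 \<le> k" "sep P k F"
  shows "\<exists>U. open U \<and> 0 \<in> U \<and> (\<lambda>w. F (z(k:=w)) * CC (k-1) z w) holomorphic_on U - {0}"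
proof -
  obtain U1 where U1: "open U1" "0 \<in> U1" "(\<lambda>w. F (z(k:=w))) holomorphic_on U1 - {0}"
    using sep_holo[OF assms(1,3), of k z] assms(2) by auto
  obtain U2 where U2: "open U2" "0 \<in> U2" "(\<lambda>w. CC (k-1) z w) holomorphic_on U2"
    using CC_holo by blast
  have "(\<lambda>w. F (z(k:=w)) * CC (k-1) z w) holomorphic_on U1 \<inter> U2 - {0}"
    by (intro holomorphic_on_mult holomorphic_on_subset[OF U1(3)] holomorphic_on_subset[OF U2(3)]) auto
  then show ?thesis using U1(1,2) U2(1,2) by (intro exI[of _ "U1 \<inter> U2"] conjI open_Int IntI) (assumption)+
qed

lemma RES_zero_fun: "RES k (\<lambda>z. 0) = (\<lambda>z. 0)"
  by (simp add: RES_def residue_const)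

lemma RES_add:
  assumes "okP P" "1 \<le> k" "sep P k F" "sep P k G"
  shows "RES k (\<lambda>z. F z + G z) = (\<lambda>z. RES k F z + RES k G z)"
proof
  fix z
  obtain U1 where U1: "open U1" "0 \<in> U1" "(\<lambda>w. F (z(k:=w)) * CC (k-1) z w) holomorphic_on U1 - {0}"
    using slice_holo[OF assms(1,2,3)] by blast
  obtain U2 where U2: "open U2" "0 \<in> U2" "(\<lambda>w. G (z(k:=w)) * CC (k-1) z w) holomorphic_on U2 - {0}"
    using slice_holo[OF assms(1,2,4)] by blast
  have "RES k (\<lambda>z. F z + G z) z = residue (\<lambda>w. F (z(k:=w)) * CC (k-1) z w + G (z(k:=w)) * CC (k-1) z w) 0"
    by (simp add: RES_def distrib_right)
  also have "\<dots> = residue (\<lambda>w. F (z(k:=w)) * CC (k-1) z w) 0 + residue (\<lambda>w. G (z(k:=w)) * CC (k-1) z w) 0"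
    by (rule residue_add[of "U1 \<inter> U2"])
       (use U1 U2 in \<open>auto intro: holomorphic_on_subset[OF U1(3)] holomorphic_on_subset[OF U2(3)]\<close>)
  finally show "RES k (\<lambda>z. F z + G z) z = RES k F z + RES k G z" by (simp add: RES_def)
qed

lemma RES_lmul:
  assumes "okP P" "1 \<le> k" "sep P k F" "\<And>z w. a (z(k:=w)) = a z"
  shows "RES k (\<lambda>z. a z * F z) = (\<lambda>z. a z * RES k F z)"
proof
  fix z
  obtain U1 where U1: "open U1" "0 \<in> U1" "(\<lambda>w. F (z(k:=w)) * CC (k-1) z w) holomorphic_on U1 - {0}"
    using slice_holo[OF assms(1,2,3)] by blast
  have "RES k (\<lambda>z. a z * F z) z = residue (\<lambda>w. a z * (F (z(k:=w)) * CC (k-1) z w)) 0"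
    by (simp add: RES_def assms(4) mult.assoc)
  also have "\<dots> = a z * residue (\<lambda>w. F (z(k:=w)) * CC (k-1) z w) 0"
    by (rule residue_lmul[OF U1])
  finally show "RES k (\<lambda>z. a z * F z) z = a z * RES k F z" by (simp add: RES_def)
qed

lemma res_fps:
  assumes "open U" "0 \<in> U" "\<phi> holomorphic_on U" "\<forall>x\<in>U-{0}. g x = \<phi> x / x ^ Suc n"
  shows "residue (\<lambda>w. g w * CC k z w) 0 = fps_nth (fps_expansion \<phi> 0 * (\<Prod>j=1..k. Geo (1 - z j))) n"
proof -
  have "residue (\<lambda>w. g w * CC k z w) 0 = residue (\<lambda>w. (\<phi> w * CC k z w) / w ^ Suc n) 0"
  proof (rule residue_cong)
    show "\<forall>\<^sub>F w in at 0. g w * CC k z w = \<phi> w * CC k z w / w ^ Suc n"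
      using eventually_at_in_open[OF assms(1,2)] by eventually_elim (use assms(4) in auto)
  qed simp
  also have "\<dots> = fps_nth (fps_expansion \<phi> 0 * (\<Prod>j=1..k. Geo (1 - z j))) n"
    by (intro residue_fps_expansion_over_power_at_0 has_fps_expansion_mult
          has_fps_expansion_fps_expansion[OF assms(1-3)] CC_fps)
  finally show ?thesis .
qed

lemma res_holo0:
  assumes "open U" "0 \<in> U" "\<phi> holomorphic_on U" "\<forall>x\<in>U-{0}. g x = \<phi> x"
  shows "residue (\<lambda>w. g w * CC k z w) 0 = 0"
proof -
  obtain U2 where U2: "open U2" "0 \<in> U2" "(\<lambda>w. CC k z w) holomorphic_on U2"
    using CC_holo by blast
  have "residue (\<lambda>w. g w * CC k z w) 0 = residue (\<lambda>w. \<phi> w * CC k z w) 0"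
  proof (rule residue_cong)
    show "\<forall>\<^sub>F w in at 0. g w * CC k z w = \<phi> w * CC k z w"
      using eventually_at_in_open[OF assms(1,2)] by eventually_elim (use assms(4) in auto)
  qed simp
  also have "\<dots> = 0"
    by (rule residue_holo[of "U \<inter> U2"]) (use assms U2 in \<open>auto intro!: holomorphic_intros intro: holomorphic_on_subset\<close>)
  finally show ?thesis .
qed

lemma prod_upd_mult:
  assumes "i \<in> S" "finite S"
  shows "(\<Prod>j\<in>S. (g(i := (\<lambda>x. g i x * c x))) j (z j)) = (\<Prod>j\<in>S. g j (z j)) * c (z i)"
proof -
  have "(\<Prod>j\<in>S. (g(i := (\<lambda>x. g i x * c x))) j (z j)) =
        (g i (z i) * c (z i)) * (\<Prod>j\<in>S-{i}. (g(i := (\<lambda>x. g i x * c x))) j (z j))"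
    using assms by (subst prod.remove[of _ i]) auto
  also have "(\<Prod>j\<in>S-{i}. (g(i := (\<lambda>x. g i x * c x))) j (z j)) = (\<Prod>j\<in>S-{i}. g j (z j))"
    by (intro prod.cong) auto
  also have "(\<Prod>j\<in>S. g j (z j)) = g i (z i) * (\<Prod>j\<in>S-{i}. g j (z j))"
    using assms by (subst prod.remove[of _ i]) auto
  ultimately show ?thesis by (simp add: mult_ac)
qed

lemma sep_geo:
  assumes "okP P" "finite J" "J \<subseteq> {1..k}"
  shows "(\<And>j. j \<in> {1..k} \<Longrightarrow> P j (g j)) \<Longrightarrow>
    sep P k (\<lambda>z. a * (\<Prod>j=1..k. g j (z j)) * fps_nth (H * (\<Prod>j\<in>J. Geo (1 - z j))) n)"
  using assms(2,3)
proof (induction J arbitrary: g n a rule: finite_induct)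
  case empty
  have "sep P k (\<lambda>z. (a * H $ n) * (\<Prod>j=1..k. g j (z j)))" by (rule sep.prod) (use empty in auto)
  then show ?case by (simp add: mult_ac)
next
  case (insert i J)
  have i: "i \<in> {1..k}" using insert by auto
  define g' where "g' l = g(i := (\<lambda>x. g i x * (1 - x) ^ l))" for l
  have expand: "fps_nth (H * (\<Prod>j\<in>insert i J. Geo (1 - z j))) n =
     (\<Sum>l=0..n. (1 - z i) ^ l * fps_nth (H * (\<Prod>j\<in>J. Geo (1 - z j))) (n - l))" for z
  proof -
    have "H * (\<Prod>j\<in>insert i J. Geo (1 - z j)) = Geo (1 - z i) * (H * (\<Prod>j\<in>J. Geo (1 - z j)))"
      using insert by (simp add: mult_ac)
    then have "fps_nth (H * (\<Prod>j\<in>insert i J. Geo (1 - z j))) n =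
        (Geo (1 - z i) * (H * (\<Prod>j\<in>J. Geo (1 - z j)))) $ n" by (rule arg_cong)
    also have "\<dots> = (\<Sum>l=0..n. Geo (1 - z i) $ l * (H * (\<Prod>j\<in>J. Geo (1 - z j))) $ (n - l))"
      by (rule fps_mult_nth)
    finally show ?thesis by (simp only: Geo_def fps_nth_Abs_fps)
  qed
  have pg: "(\<Prod>j=1..k. g' l j (z j)) = (\<Prod>j=1..k. g j (z j)) * (1 - z i) ^ l" for l z
    unfolding g'_def by (rule prod_upd_mult[OF i]) simp
  have "sep P k (\<lambda>z. \<Sum>l=0..n. a * (\<Prod>j=1..k. g' l j (z j)) * fps_nth (H * (\<Prod>j\<in>J. Geo (1 - z j))) (n - l))"
  proof (rule sep_sum)
    fix l assume "l \<in> {0..n}"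
    show "sep P k (\<lambda>z. a * (\<Prod>j=1..k. g' l j (z j)) * fps_nth (H * (\<Prod>j\<in>J. Geo (1 - z j))) (n - l))"
    proof (rule insert.IH)
      fix j assume j: "j \<in> {1..k}"
      show "P j (g' l j)"
        using insert.prems(1)[OF j] okP_mult[OF assms(1), of j "g j" l] unfolding g'_def by auto
    qed (use insert in auto)
  qed simp
  also have "(\<lambda>z. \<Sum>l=0..n. a * (\<Prod>j=1..k. g' l j (z j)) * fps_nth (H * (\<Prod>j\<in>J. Geo (1 - z j))) (n - l)) =
     (\<lambda>z. a * (\<Prod>j=1..k. g j (z j)) * fps_nth (H * (\<Prod>j\<in>insert i J. Geo (1 - z j))) n)"
    unfolding pg expand by (simp add: sum_distrib_left mult_ac)
  finally show ?case .
qed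

lemma RES_prod:
  assumes "okP P" "1 \<le> k" "\<And>j. j \<in> {1..k} \<Longrightarrow> P j (g j)"
  shows "sep P (k-1) (RES k (\<lambda>z. a * (\<Prod>j=1..k. g j (z j))))"
proof -
  obtain K where "good K (g k)" using okP_good[OF assms(1) assms(3)] assms(2) by auto
  then obtain U \<phi> where U: "open U" "0 \<in> U" "\<phi> holomorphic_on U" "\<forall>x\<in>U-{0}. g k x = \<phi> x / x ^ K"
    unfolding good_def by blast
  have eq: "RES k (\<lambda>z. a * (\<Prod>j=1..k. g j (z j))) z =
      (a * (\<Prod>j=1..k-1. g j (z j))) * residue (\<lambda>w. g k w * CC (k-1) z w) 0" for z
  proof -
    obtain U1 where U1: "open U1" "0 \<in> U1" "g k holomorphic_on U1 - {0}"
      using \<open>good K (g k)\<close> by (rule good_holo)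
    obtain U2 where U2: "open U2" "0 \<in> U2" "(\<lambda>w. CC (k-1) z w) holomorphic_on U2"
      using CC_holo by blast
    have "RES k (\<lambda>z. a * (\<Prod>j=1..k. g j (z j))) z =
        residue (\<lambda>w. (a * (\<Prod>j=1..k-1. g j (z j))) * (g k w * CC (k-1) z w)) 0"
      unfolding RES_def using prod_slice[OF assms(2), of g z] by (simp add: mult_ac)
    also have "\<dots> = (a * (\<Prod>j=1..k-1. g j (z j))) * residue (\<lambda>w. g k w * CC (k-1) z w) 0"
      by (rule residue_lmul[of "U1 \<inter> U2"])
         (use U1 U2 in \<open>auto intro!: holomorphic_intros intro: holomorphic_on_subset[OF U1(3)] holomorphic_on_subset[OF U2(3)]\<close>)
    finally show ?thesis .
  qed
  show ?thesis
  proof (cases K)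
    case 0
    have "RES k (\<lambda>z. a * (\<Prod>j=1..k. g j (z j))) = (\<lambda>z. 0)"
    proof
      fix z
      have "residue (\<lambda>w. g k w * CC (k-1) z w) 0 = 0"
        by (rule res_holo0[OF U(1,2,3)]) (use U(4) 0 in auto)
      then show "RES k (\<lambda>z. a * (\<Prod>j=1..k. g j (z j))) z = 0" by (subst eq) simp
    qed
    then show ?thesis by (simp add: sep.zero)
  next
    case (Suc n)
    have e: "RES k (\<lambda>z. a * (\<Prod>j=1..k. g j (z j))) =
       (\<lambda>z. a * (\<Prod>j=1..k-1. g j (z j)) * fps_nth (fps_expansion \<phi> 0 * (\<Prod>j\<in>{1..k-1}. Geo (1 - z j))) n)"
    proof
      fix z
      show "RES k (\<lambda>z. a * (\<Prod>j=1..k. g j (z j))) z =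
         a * (\<Prod>j=1..k-1. g j (z j)) * fps_nth (fps_expansion \<phi> 0 * (\<Prod>j\<in>{1..k-1}. Geo (1 - z j))) n"
        using res_fps[OF U(1,2,3), of "g k" n "k-1" z] U(4) Suc by (subst eq) simp
    qed
    have "sep P (k-1) (\<lambda>z. a * (\<Prod>j=1..k-1. g j (z j)) * fps_nth (fps_expansion \<phi> 0 * (\<Prod>j\<in>{1..k-1}. Geo (1 - z j))) n)"
      by (rule sep_geo[OF assms(1)]) (use assms(3) in auto)
    then show ?thesis by (subst e)
  qed
qed

lemma RES_sep:
  assumes "okP P" "1 \<le> k" "sep P k F"
  shows "sep P (k-1) (RES k F)"
  using assms(3)
proof (induction rule: sep.induct)
  case zero then show ?case by (simp add: RES_zero_fun sep.zero)
next
  case (prod g a) then show ?case by (rule RES_prod[OF assms(1,2)])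
next
  case (add F G)
  then show ?case by (simp add: RES_add[OF assms(1,2)] sep.add)
qed

lemma RES_vanish:
  assumes "okP P" "1 \<le> k" "\<And>g. P k g \<Longrightarrow> good 0 g" "sep P k F"
  shows "RES k F = (\<lambda>z. 0)"
  using assms(4)
proof (induction rule: sep.induct)
  case zero then show ?case by (simp add: RES_zero_fun)
next
  case (prod g a)
  show ?case
  proof
    fix z
    obtain U \<phi> where U: "open U" "0 \<in> U" "\<phi> holomorphic_on U" "\<forall>x\<in>U-{0}. g k x = \<phi> x / x ^ 0"
      using assms(3)[OF prod] assms(2) unfolding good_def by fastforce
    obtain U1 where U1: "open U1" "0 \<in> U1" "g k holomorphic_on U1 - {0}"
      using assms(3)[OF prod] assms(2) by (meson atLeastAtMost_iff good_holo order_refl)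
    obtain U2 where U2: "open U2" "0 \<in> U2" "(\<lambda>w. CC (k-1) z w) holomorphic_on U2"
      using CC_holo by blast
    have "RES k (\<lambda>z. a * (\<Prod>j=1..k. g j (z j))) z =
        residue (\<lambda>w. (a * (\<Prod>j=1..k-1. g j (z j))) * (g k w * CC (k-1) z w)) 0"
      unfolding RES_def using prod_slice[OF assms(2), of g z] by (simp add: mult_ac)
    also have "\<dots> = (a * (\<Prod>j=1..k-1. g j (z j))) * residue (\<lambda>w. g k w * CC (k-1) z w) 0"
      by (rule residue_lmul[of "U1 \<inter> U2"])
         (use U1 U2 in \<open>auto intro!: holomorphic_intros intro: holomorphic_on_subset[OF U1(3)] holomorphic_on_subset[OF U2(3)]\<close>)
    finally have ch: "RES k (\<lambda>z. a * (\<Prod>j=1..k. g j (z j))) z = (a * (\<Prod>j=1..k-1. g j (z j))) * residue (\<lambda>w. g k w * CC (k-1) z w) 0" .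
    have "residue (\<lambda>w. g k w * CC (k-1) z w) 0 = 0"
      by (rule res_holo0[OF U(1,2,3)]) (use U(4) in auto)
    then show "RES k (\<lambda>z. a * (\<Prod>j=1..k. g j (z j))) z = 0" by (subst ch) simp
  qed
next
  case (add F G)
  then show ?case by (simp add: RES_add[OF assms(1,2)])
qed

lemma RESR_le: "k \<le> m \<Longrightarrow> RESR m k F = F"
  by (induction k arbitrary: F) auto

lemma RESR_sep:
  assumes "okP P" shows "m \<le> k \<Longrightarrow> sep P k F \<Longrightarrow> sep P m (RESR m k F)"
proof (induction k arbitrary: F)
  case 0 then show ?case by simp
next
  case (Suc k)
  show ?case
  proof (cases "Suc k \<le> m")
    case True then show ?thesis using Suc by (simp add: RESR_le)
  next
    case False
    then have "sep P k (RES (Suc k) F)" using RES_sep[OF assms, of "Suc k" F] Suc by simp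
    then show ?thesis using False Suc by simp
  qed
qed

lemma RESR_zero_fun: "RESR m k (\<lambda>z. 0) = (\<lambda>z. 0)"
  by (induction k) (auto simp: RES_zero_fun)

lemma RESR_add:
  assumes "okP P" shows "sep P k F \<Longrightarrow> sep P k G \<Longrightarrow>
    RESR m k (\<lambda>z. F z + G z) = (\<lambda>z. RESR m k F z + RESR m k G z)"
proof (induction k arbitrary: F G)
  case 0 then show ?case by simp
next
  case (Suc k)
  show ?case
  proof (cases "Suc k \<le> m")
    case True then show ?thesis by simp
  next
    case False
    have "RES (Suc k) (\<lambda>z. F z + G z) = (\<lambda>z. RES (Suc k) F z + RES (Suc k) G z)"
      using RES_add[OF assms, of "Suc k" F G] Suc by simp
    moreover have "sep P k (RES (Suc k) F)" "sep P k (RES (Suc k) G)"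
      using RES_sep[OF assms, of "Suc k"] Suc by auto
    ultimately show ?thesis using False Suc.IH by simp
  qed
qed

lemma RESR_sum:
  assumes "okP P" "finite I" "\<And>i. i \<in> I \<Longrightarrow> sep P k (T i)"
  shows "RESR m k (\<lambda>z. \<Sum>i\<in>I. T i z) = (\<lambda>z. \<Sum>i\<in>I. RESR m k (T i) z)"
  using assms(2,3)
proof (induction I rule: finite_induct)
  case empty then show ?case by (simp add: RESR_zero_fun)
next
  case (insert x I)
  have "sep P k (\<lambda>z. \<Sum>i\<in>I. T i z)" by (rule sep_sum) (use insert in auto)
  then show ?case
    using insert RESR_add[OF assms(1), of k "T x" "\<lambda>z. \<Sum>i\<in>I. T i z" m] by simp
qed

lemma RESR_lmul:
  assumes "okP P" "\<And>j z w. m < j \<Longrightarrow> a (z(j:=w)) = a z"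
  shows "sep P k F \<Longrightarrow> RESR m k (\<lambda>z. a z * F z) = (\<lambda>z. a z * RESR m k F z)"
proof (induction k arbitrary: F)
  case 0 then show ?case by simp
next
  case (Suc k)
  show ?case
  proof (cases "Suc k \<le> m")
    case True then show ?thesis by simp
  next
    case False
    have "RES (Suc k) (\<lambda>z. a z * F z) = (\<lambda>z. a z * RES (Suc k) F z)"
      by (rule RES_lmul[OF assms(1) _ Suc.prems]) (use False assms(2) in auto)
    moreover have "sep P k (RES (Suc k) F)"
      using RES_sep[OF assms(1), of "Suc k"] Suc by auto
    ultimately show ?thesis using False Suc.IH by simp
  qed
qed

lemma RESR_split: "m < k \<Longrightarrow> RESR m k F = RES (Suc m) (RESR (Suc m) k F)"
proof (induction k arbitrary: F)
  case 0 then show ?case by simp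
next
  case (Suc k)
  show ?case
  proof (cases "k = m")
    case True then show ?thesis by (simp add: RESR_le)
  next
    case False
    then have "m < k" using Suc by simp
    then show ?thesis using Suc.IH by simp
  qed
qed

lemma cross_Suc: "cross (Suc k) z = cross k z * (\<Prod>j=1..k. cf (z j) (z (Suc k)))"
proof -
  have "cross (Suc k) z = (\<Prod>j=1..k. \<Prod>l=j+1..Suc k. cf (z j) (z l)) * (\<Prod>l=Suc k+1..Suc k. cf (z (Suc k)) (z l))"
    unfolding cross_def by (simp add: prod.cl_ivl_Suc)
  also have "(\<Prod>l=Suc k+1..Suc k. cf (z (Suc k)) (z l)) = 1" by simp
  also have "(\<Prod>j=1..k. \<Prod>l=j+1..Suc k. cf (z j) (z l)) = (\<Prod>j=1..k. (\<Prod>l=j+1..k. cf (z j) (z l)) * cf (z j) (z (Suc k)))"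
    by (intro prod.cong refl) (simp add: prod.cl_ivl_Suc)
  finally show ?thesis unfolding cross_def by (simp add: prod.distrib)
qed

lemma cross_upd: "cross (Suc k) (z(Suc k := w)) = cross k z * CC k z w"
proof -
  have "cross k (z(Suc k := w)) = cross k z" unfolding cross_def
    by (intro prod.cong refl) auto
  moreover have "(\<Prod>j=1..k. cf ((z(Suc k := w)) j) ((z(Suc k := w)) (Suc k))) = CC k z w"
    unfolding CC_def by (intro prod.cong refl) auto
  ultimately show ?thesis by (simp add: cross_Suc)
qed

lemma res_var_cross:
  assumes "okP P" "1 \<le> k" "sep P k F"
  shows "res_var k (\<lambda>z. cross k z * F z) = (\<lambda>z. cross (k-1) z * RES k F z)"
proof
  fix z
  obtain k' where k: "k = Suc k'" using assms(2) by (cases k) auto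
  obtain U1 where U1: "open U1" "0 \<in> U1" "(\<lambda>w. F (z(k:=w)) * CC (k-1) z w) holomorphic_on U1 - {0}"
    using slice_holo[OF assms] by blast
  have "res_var k (\<lambda>z. cross k z * F z) z = residue (\<lambda>w. cross (k-1) z * (F (z(k:=w)) * CC (k-1) z w)) 0"
    unfolding res_var_def using cross_upd[of k' z] k by (simp add: mult_ac)
  also have "\<dots> = cross (k-1) z * residue (\<lambda>w. F (z(k:=w)) * CC (k-1) z w) 0"
    by (rule residue_lmul[OF U1])
  finally show "res_var k (\<lambda>z. cross k z * F z) z = cross (k-1) z * RES k F z" by (simp add: RES_def)
qed

lemma iresR_cross:
  assumes "okP P" shows "m \<le> k \<Longrightarrow> sep P k F \<Longrightarrow> iresR m k (\<lambda>z. cross k z * F z) = (\<lambda>z. cross m z * RESR m k F z)"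
proof (induction k arbitrary: F)
  case 0 then show ?case by simp
next
  case (Suc k)
  show ?case
  proof (cases "Suc k \<le> m")
    case True then have "m = Suc k" using Suc by simp
    then show ?thesis by simp
  next
    case False
    have "res_var (Suc k) (\<lambda>z. cross (Suc k) z * F z) = (\<lambda>z. cross k z * RES (Suc k) F z)"
      using res_var_cross[OF assms, of "Suc k" F] Suc by simp
    moreover have "sep P k (RES (Suc k) F)"
      using RES_sep[OF assms, of "Suc k"] Suc by auto
    ultimately show ?thesis using False Suc.IH by simp
  qed
qed

lemma ires_iresR: "ires k F = iresR 0 k F"
  by (induction k arbitrary: F) auto

lemma ires_cong:
  "(\<And>z. (\<forall>i\<in>{1..k}. z i \<noteq> 0 \<and> z i \<noteq> 1) \<Longrightarrow> (\<forall>i\<in>{1..k}. \<forall>j\<in>{1..k}. i \<noteq> j \<longrightarrow> z i \<noteq> z j) \<Longrightarrow> F z = G z)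
   \<Longrightarrow> ires k F = ires k G"
proof (induction k arbitrary: F G)
  case 0 then show ?case by auto
next
  case (Suc k)
  have "ires k (res_var (Suc k) F) = ires k (res_var (Suc k) G)"
  proof (rule Suc.IH)
    fix z :: "nat \<Rightarrow> complex" assume z1: "\<forall>i\<in>{1..k}. z i \<noteq> 0 \<and> z i \<noteq> 1"
      and z2: "\<forall>i\<in>{1..k}. \<forall>j\<in>{1..k}. i \<noteq> j \<longrightarrow> z i \<noteq> z j"
    let ?B = "insert 1 (z ` {1..k})"
    have ev: "\<forall>\<^sub>F w in at 0. \<forall>b\<in>?B. w \<noteq> b"
    proof (rule eventually_ball_finite)
      show "\<forall>b\<in>?B. \<forall>\<^sub>F w in at (0::complex). w \<noteq> b"
      proof
        fix b assume "b \<in> ?B"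
        then have "b \<noteq> 0" using z1 by auto
        then have "open (-{b})" "(0::complex) \<in> -{b}" by auto
        from eventually_at_in_open[OF this] show "\<forall>\<^sub>F w in at 0. w \<noteq> b"
          by eventually_elim auto
      qed
    qed simp
    have "\<forall>\<^sub>F w in at 0. F (z(Suc k := w)) = G (z(Suc k := w))"
      using ev eventually_at_in_open[OF open_UNIV UNIV_I, of 0]
    proof eventually_elim
      case (elim w)
      then have w: "w \<noteq> 0" "w \<noteq> 1" "\<forall>i\<in>{1..k}. w \<noteq> z i" by auto
      show ?case
      proof (rule Suc.prems)
        show "\<forall>i\<in>{1..Suc k}. (z(Suc k := w)) i \<noteq> 0 \<and> (z(Suc k := w)) i \<noteq> 1"
          using z1 w by (auto simp: le_Suc_eq)
        show "\<forall>i\<in>{1..Suc k}. \<forall>j\<in>{1..Suc k}. i \<noteq> j \<longrightarrow> (z(Suc k := w)) i \<noteq> (z(Suc k := w)) j"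
          using z2 w by (auto simp: le_Suc_eq)
      qed
    qed
    then show "res_var (Suc k) F z = res_var (Suc k) G z"
      unfolding res_var_def by (intro residue_cong) auto
  qed
  then show ?case by simp
qed

lemma det_sep:
  assumes one: "\<And>v. P v (\<lambda>_. 1)" and v0: "1 \<le> v0" "v0 + n \<le> K" and ph: "P v0 \<phi>"
    and E: "\<And>i j. i < n \<Longrightarrow> j < n \<Longrightarrow> P (v0+1+j) (E i j)"
  shows "sep P K (\<lambda>z. a * \<phi> (z v0) * det (mat n n (\<lambda>(i,j). E i j (z (v0+1+j)))))"
proof -
  define G where "G p v = (if v = v0 then \<phi> else if v0 < v \<and> v \<le> v0 + n then E (inv_into UNIV p (v - v0 - 1)) (v - v0 - 1) else (\<lambda>_. 1))" for p :: "nat \<Rightarrow> nat" and v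
  have detexp: "det (mat n n (\<lambda>(i,j). E i j (z (v0+1+j)))) =
      (\<Sum>p\<in>{p. p permutes {0..<n}}. signof p * (\<Prod>i=0..<n. E i (p i) (z (v0+1+p i))))" for z
  proof -
    have "det (mat n n (\<lambda>(i,j). E i j (z (v0+1+j)))) =
      (\<Sum>p\<in>{p. p permutes {0..<n}}. signof p * (\<Prod>i=0..<n. mat n n (\<lambda>(i,j). E i j (z (v0+1+j))) $$ (i, p i)))"
      by (rule det_def') auto
    also have "\<dots> = (\<Sum>p\<in>{p. p permutes {0..<n}}. signof p * (\<Prod>i=0..<n. E i (p i) (z (v0+1+p i))))"
    proof (intro sum.cong refl arg_cong2[where f="(*)"] prod.cong)
      fix p i assume p: "p \<in> {p. p permutes {0..<n}}" and i: "i \<in> {0..<n}"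
      have "p i < n" using permutes_in_image[of p "{0..<n}" i] p i by auto
      then show "mat n n (\<lambda>(i,j). E i j (z (v0+1+j))) $$ (i, p i) = E i (p i) (z (v0+1+p i))"
        using i by simp
    qed
    finally show ?thesis .
  qed
  have prodG: "(\<Prod>v=1..K. G p v (z v)) = \<phi> (z v0) * (\<Prod>i=0..<n. E i (p i) (z (v0+1+p i)))"
    if p: "p permutes {0..<n}" for p z
  proof -
    have "(\<Prod>v=1..K. G p v (z v)) = (\<Prod>v\<in>insert v0 {v0+1..v0+n}. G p v (z v))"
      by (rule prod.mono_neutral_right) (use v0 in \<open>auto simp: G_def\<close>)
    also have "\<dots> = \<phi> (z v0) * (\<Prod>v\<in>{v0+1..v0+n}. G p v (z v))"
      by (subst prod.insert) (auto simp: G_def)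
    also have "{v0+1..v0+n} = (\<lambda>j. v0+1+j) ` {0..<n}"
    proof -
      have "x \<in> (\<lambda>j. v0+1+j) ` {0..<n}" if "x \<in> {v0+1..v0+n}" for x
        using that by (intro image_eqI[of _ _ "x - v0 - 1"]) auto
      then show ?thesis by auto
    qed
    also have "(\<Prod>v\<in>(\<lambda>j. v0+1+j) ` {0..<n}. G p v (z v)) = (\<Prod>j=0..<n. G p (v0+1+j) (z (v0+1+j)))"
      by (subst prod.reindex) (auto simp: inj_on_def)
    also have "\<dots> = (\<Prod>j=0..<n. E (inv_into UNIV p j) j (z (v0+1+j)))"
      by (intro prod.cong refl) (auto simp: G_def)
    also have "\<dots> = (\<Prod>i=0..<n. E (inv_into UNIV p (p i)) (p i) (z (v0+1+p i)))"
      using prod.permute[OF p, of "\<lambda>j. E (inv_into UNIV p j) j (z (v0+1+j))"] by (simp add: comp_def)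
    also have "\<dots> = (\<Prod>i=0..<n. E i (p i) (z (v0+1+p i)))"
      using permutes_inverses(2)[OF p] by simp
    finally show ?thesis .
  qed
  have "sep P K (\<lambda>z. \<Sum>p\<in>{p. p permutes {0..<n}}. (a * signof p) * (\<Prod>v=1..K. G p v (z v)))"
  proof (rule sep_sum)
    show "finite {p. p permutes {0..<n}}" by (rule finite_permutations) simp
  next
    fix p assume p: "p \<in> {p. p permutes {0..<n}}"
    show "sep P K (\<lambda>z. (a * signof p) * (\<Prod>v=1..K. G p v (z v)))"
    proof (rule sep.prod)
      fix v assume v: "v \<in> {1..K}"
      show "P v (G p v)"
      proof (cases "v = v0")
        case True then show ?thesis by (simp add: G_def ph)
      next
        case False
        show ?thesis
        proof (cases "v0 < v \<and> v \<le> v0 + n")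
          case True
          have ip: "inv_into UNIV p permutes {0..<n}" using p by (simp add: permutes_inv)
          have "inv_into UNIV p (v - v0 - 1) < n" using permutes_in_image[OF ip, of "v - v0 - 1"] True by auto
          moreover have "v0 + 1 + (v - v0 - 1) = v" using True by auto
          ultimately show ?thesis using E[of "inv_into UNIV p (v - v0 - 1)" "v - v0 - 1"] True False
            by (auto simp: G_def)
        next
          case False2: False
          then show ?thesis using False by (auto simp: G_def one)
        qed
      qed
    qed
  qed
  also have "(\<lambda>z. \<Sum>p\<in>{p. p permutes {0..<n}}. (a * signof p) * (\<Prod>v=1..K. G p v (z v))) =
      (\<lambda>z. a * \<phi> (z v0) * det (mat n n (\<lambda>(i,j). E i j (z (v0+1+j)))))"
  proof
    fix z
    show "(\<Sum>p\<in>{p. p permutes {0..<n}}. (a * signof p) * (\<Prod>v=1..K. G p v (z v))) =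
      a * \<phi> (z v0) * det (mat n n (\<lambda>(i,j). E i j (z (v0+1+j))))"
      unfolding detexp sum_distrib_left
    proof (intro sum.cong refl)
      fix p assume "p \<in> {p. p permutes {0..<n}}"
      then have "(\<Prod>v=1..K. G p v (z v)) = \<phi> (z v0) * (\<Prod>i=0..<n. E i (p i) (z (v0+1+p i)))"
        by (intro prodG) auto
      then show "a * signof p * (\<Prod>v=1..K. G p v (z v)) =
          a * \<phi> (z v0) * (signof p * (\<Prod>i=0..<n. E i (p i) (z (v0+1+p i))))"
        by (simp only: mult_ac)
    qed
  qed
  finally show ?thesis .
qed

definition Ent :: "nat \<Rightarrow> (nat \<Rightarrow> complex \<Rightarrow> complex) \<Rightarrow> nat \<Rightarrow> nat \<Rightarrow> complex \<Rightarrow> complex" where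
  "Ent s h i j x = (x - 1) ^ (s - 1 - i) * x ^ i * h i x / (x ^ (j + 1) * (x - 1) ^ (s - j))"

definition Amat :: "nat \<Rightarrow> nat \<Rightarrow> (nat \<Rightarrow> complex \<Rightarrow> complex) \<Rightarrow> (nat \<Rightarrow> complex) \<Rightarrow> complex mat" where
  "Amat m s h z = mat s s (\<lambda>(i,j). Ent s h i j (z (m + 1 + j)))"

lemma Ent_shift: "Ent (Suc s) h (Suc i) (Suc j) x = Ent s (\<lambda>i. h (Suc i)) i j x"
proof (cases "x = 0")
  case True then show ?thesis by (simp add: Ent_def)
next
  case False
  have "Ent (Suc s) h (Suc i) (Suc j) x =
      (x * ((x - 1) ^ (s - 1 - i) * x ^ i * h (Suc i) x)) / (x * (x ^ (j + 1) * (x - 1) ^ (s - j)))"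
    unfolding Ent_def by (simp add: mult_ac)
  also have "\<dots> = Ent s (\<lambda>i. h (Suc i)) i j x"
    unfolding Ent_def using False by (rule mult_divide_mult_cancel_left)
  finally show ?thesis .
qed

lemma good_mult: "good K g \<Longrightarrow> good K (\<lambda>x. g x * (1 - x) ^ e)"
  unfolding good_def
proof (elim exE conjE)
  fix U \<phi> assume U: "open U" "0 \<in> U" "\<phi> holomorphic_on U" "\<forall>x\<in>U - {0}. g x = \<phi> x / x ^ K"
  show "\<exists>U \<phi>. open U \<and> 0 \<in> U \<and> \<phi> holomorphic_on U \<and> (\<forall>x\<in>U - {0}. g x * (1 - x) ^ e = \<phi> x / x ^ K)"
    using U by (intro exI[of _ U] exI[of _ "\<lambda>x. \<phi> x * (1 - x) ^ e"]) (auto intro!: holomorphic_intros)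
qed

lemma good_one: "good K (\<lambda>_. 1)"
  unfolding good_def by (intro exI[of _ UNIV] exI[of _ "\<lambda>x. x ^ K"]) (auto intro!: holomorphic_intros)

lemma okP_Pg: "okP (\<lambda>j g. good K g)"
  unfolding okP_def using good_mult by blast

lemma okP_Pm: "okP (\<lambda>j g. good K g \<and> (j \<le> v \<longrightarrow> good 0 g))"
  unfolding okP_def using good_mult by blast

lemma good_Ent:
  assumes "c < s" "s \<le> K" "\<And>i. h i holomorphic_on UNIV"
  shows "good K (Ent s h r c)"
  unfolding good_def
proof (intro exI conjI)
  let ?U = "-{1::complex}"
  let ?\<phi> = "\<lambda>x. (x - 1) ^ (s - 1 - r) * x ^ r * h r x * x ^ (K - (c + 1)) / (x - 1) ^ (s - c)"
  show "open ?U" "0 \<in> ?U" by auto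
  show "?\<phi> holomorphic_on ?U"
    by (intro holomorphic_intros holomorphic_on_subset[OF assms(3)]) auto
  show "\<forall>x\<in>?U - {0}. Ent s h r c x = ?\<phi> x / x ^ K"
  proof
    fix x assume x: "x \<in> ?U - {0}"
    then have x0: "x \<noteq> 0" and x1: "x - 1 \<noteq> 0" by auto
    have K: "x ^ K = x ^ (K - (c + 1)) * x ^ (c + 1)"
    proof -
      have "K = (K - (c + 1)) + (c + 1)" using assms by simp
      then show ?thesis by (metis power_add)
    qed
    show "Ent s h r c x = ?\<phi> x / x ^ K"
      unfolding Ent_def K using x0 x1 by (simp add: field_simps)
  qed
qed

lemma good0_Ent:
  assumes "1 \<le> r" "\<And>i. h i holomorphic_on UNIV"
  shows "good 0 (Ent s h r 0)"
  unfolding good_def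
proof (intro exI conjI)
  let ?U = "-{1::complex}"
  let ?\<phi> = "\<lambda>x. (x - 1) ^ (s - 1 - r) * x ^ (r - 1) * h r x / (x - 1) ^ s"
  show "open ?U" "0 \<in> ?U" by auto
  show "?\<phi> holomorphic_on ?U"
    by (intro holomorphic_intros holomorphic_on_subset[OF assms(2)]) auto
  show "\<forall>x\<in>?U - {0}. Ent s h r 0 x = ?\<phi> x / x ^ 0"
  proof
    fix x assume x: "x \<in> ?U - {0}"
    then have x0: "x \<noteq> 0" and x1: "x - 1 \<noteq> 0" by auto
    have r: "x ^ r = x * x ^ (r - 1)" using assms(1) by (cases r) auto
    show "Ent s h r 0 x = ?\<phi> x / x ^ 0"
      unfolding Ent_def r using x0 x1 by (simp add: field_simps)
  qed
qed

lemma CC_0: "CC k z 0 = 1"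
  by (simp add: CC_def cf_def)

lemma GC:
  assumes "\<And>i. h i holomorphic_on UNIV"
  shows "RESR m (m+s) (\<lambda>z. det (Amat m s h z)) = (\<lambda>z. (-1)^s * (\<Prod>i<s. h i 0))"
  using assms
proof (induction s arbitrary: m h)
  case 0
  have "det (Amat m 0 h z) = 1" for z by (rule det_dim_zero) (simp add: Amat_def)
  then show ?case by (simp add: RESR_le)
next
  case (Suc s)
  define S where "S = Suc s"
  define E where "E = (\<lambda>i i' j'. Ent S h (if i' < i then i' else Suc i') (Suc j'))"
  define T where "T = (\<lambda>i z. (-1)^i * Ent S h i 0 (z (Suc m)) * det (mat s s (\<lambda>(i',j'). E i i' j' (z (Suc m + 1 + j')))))"
  have lap: "det (Amat m S h z) = (\<Sum>i<S. T i z)" for z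
  proof -
    have "det (Amat m S h z) = (\<Sum>i<S. Amat m S h z $$ (i,0) * cofactor (Amat m S h z) i 0)"
      by (rule laplace_expansion_column) (auto simp: Amat_def S_def)
    also have "\<dots> = (\<Sum>i<S. T i z)"
    proof (rule sum.cong[OF refl])
      fix i assume i: "i \<in> {..<S}"
      have md: "mat_delete (Amat m S h z) i 0 = mat s s (\<lambda>(i',j'). E i i' j' (z (Suc m + 1 + j')))"
        by (rule eq_matI) (auto simp: mat_delete_def Amat_def E_def S_def)
      show "Amat m S h z $$ (i,0) * cofactor (Amat m S h z) i 0 = T i z"
        unfolding cofactor_def md using i by (simp add: T_def Amat_def S_def)
    qed
    finally show ?thesis .
  qed
  have hol: "\<And>i. h i holomorphic_on UNIV" by fact
  have sepT: "sep (\<lambda>j g. good S g) (m+S) (T i)" if "i < S" for i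
    unfolding T_def
  proof (rule det_sep)
    show "good S (Ent S h i 0)" by (rule good_Ent) (use hol in \<open>auto simp: S_def\<close>)
    fix i' j' assume "i' < s" "j' < s"
    then show "good S (E i i' j')" unfolding E_def by (intro good_Ent) (use hol in \<open>auto simp: S_def\<close>)
  qed (auto simp: good_one S_def)
  have sepTm: "sep (\<lambda>j g. good S g \<and> (j \<le> Suc m \<longrightarrow> good 0 g)) (m+S) (T i)" if "i < S" "1 \<le> i" for i
    unfolding T_def
  proof (rule det_sep)
    show "good S (Ent S h i 0) \<and> (Suc m \<le> Suc m \<longrightarrow> good 0 (Ent S h i 0))"
      using that by (auto intro!: good_Ent good0_Ent hol simp: S_def)
    fix i' j' assume "i' < s" "j' < s"
    then show "good S (E i i' j') \<and> (Suc m + 1 + j' \<le> Suc m \<longrightarrow> good 0 (E i i' j'))"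
      unfolding E_def by (auto intro!: good_Ent hol simp: S_def)
  qed (auto simp: good_one S_def)
  have R: "RESR m (m+S) (\<lambda>z. det (Amat m S h z)) = (\<lambda>z. \<Sum>i<S. RESR m (m+S) (T i) z)"
    unfolding lap by (rule RESR_sum[OF okP_Pg]) (use sepT in auto)
  have Ti: "RESR m (m+S) (T i) = (\<lambda>z. 0)" if "i < S" "1 \<le> i" for i
  proof -
    have "RESR m (m+S) (T i) = RES (Suc m) (RESR (Suc m) (m+S) (T i))"
      by (rule RESR_split) (simp add: S_def)
    also have "\<dots> = (\<lambda>z. 0)"
    proof (rule RES_vanish[OF okP_Pm[of S "Suc m"]])
      show "sep (\<lambda>j g. good S g \<and> (j \<le> Suc m \<longrightarrow> good 0 g)) (Suc m) (RESR (Suc m) (m+S) (T i))"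
        by (rule RESR_sep[OF okP_Pm]) (use sepTm that in \<open>auto simp: S_def\<close>)
    qed auto
    finally show ?thesis .
  qed
  define h' where "h' = (\<lambda>i. h (Suc i))"
  define f where "f = Ent S h 0 0"
  define C where "C = (-1)^s * (\<Prod>i<s. h' i 0)"
  have T0: "T 0 = (\<lambda>z. f (z (Suc m)) * det (Amat (Suc m) s h' z))"
  proof
    fix z
    have "mat s s (\<lambda>(i',j'). E 0 i' j' (z (Suc m + 1 + j'))) = Amat (Suc m) s h' z"
      unfolding Amat_def E_def S_def h'_def by (intro cong_mat) (auto simp: Ent_shift)
    then show "T 0 z = f (z (Suc m)) * det (Amat (Suc m) s h' z)"
      by (simp add: T_def f_def)
  qed
  have sepD: "sep (\<lambda>j g. good s g) (Suc m + s) (\<lambda>z. 1 * (\<lambda>_. 1) (z (Suc m)) * det (mat s s (\<lambda>(i,j). Ent s h' i j (z (Suc m + 1 + j)))))"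
  proof (rule det_sep)
    fix i j assume "i < s" "j < s"
    then show "good s (Ent s h' i j)" by (intro good_Ent) (auto simp: h'_def hol)
  qed (auto simp: good_one)
  then have sepD': "sep (\<lambda>j g. good s g) (Suc m + s) (\<lambda>z. det (Amat (Suc m) s h' z))"
    by (simp add: Amat_def)
  have IH: "RESR (Suc m) (Suc m + s) (\<lambda>z. det (Amat (Suc m) s h' z)) = (\<lambda>z. C)"
    using Suc.IH[of h' "Suc m"] hol unfolding C_def h'_def by simp
  have T0R: "RESR m (m+S) (T 0) = (\<lambda>z. - h 0 0 * C)"
  proof -
    have "RESR m (m+S) (T 0) = RES (Suc m) (RESR (Suc m) (Suc m + s) (T 0))"
      by (subst RESR_split) (auto simp: S_def)
    also have "RESR (Suc m) (Suc m + s) (T 0) = (\<lambda>z. f (z (Suc m)) * RESR (Suc m) (Suc m + s) (\<lambda>z. det (Amat (Suc m) s h' z)) z)"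
      unfolding T0 by (rule RESR_lmul[OF okP_Pg _ sepD']) auto
    also have "\<dots> = (\<lambda>z. f (z (Suc m)) * C)" unfolding IH by (rule refl)
    also have "RES (Suc m) (\<lambda>z. f (z (Suc m)) * C) = (\<lambda>z. - h 0 0 * C)"
    proof
      fix z
      obtain U2 where U2: "open U2" "0 \<in> U2" "(\<lambda>w. CC m z w) holomorphic_on U2"
        using CC_holo by blast
      let ?U = "U2 \<inter> -{1}"
      let ?\<psi> = "\<lambda>w. h 0 w / (w - 1) * C * CC m z w"
      have oU: "open ?U" "0 \<in> ?U" using U2 by auto
      have "RES (Suc m) (\<lambda>z. f (z (Suc m)) * C) z = residue (\<lambda>w. f w * C * CC m z w) 0"
        by (simp add: RES_def)
      also have "\<dots> = residue (\<lambda>w. ?\<psi> w / (w - 0)) 0"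
      proof (rule residue_cong)
        show "\<forall>\<^sub>F w in at 0. f w * C * CC m z w = ?\<psi> w / (w - 0)"
          using eventually_at_in_open[OF oU]
        proof eventually_elim
          case (elim w)
          then have w0: "w \<noteq> 0" and w1: "w - 1 \<noteq> 0" by auto
          show ?case unfolding f_def Ent_def S_def using w0 w1 by (simp add: field_simps)
        qed
      qed simp
      also have "\<dots> = ?\<psi> 0"
        by (rule residue_simple[OF oU]) (use U2 hol in \<open>auto intro!: holomorphic_intros intro: holomorphic_on_subset\<close>)
      also have "\<dots> = - h 0 0 * C" by (simp add: CC_0)
      finally show "RES (Suc m) (\<lambda>z. f (z (Suc m)) * C) z = - h 0 0 * C" .
    qed
    finally show ?thesis .
  qed
  have "RESR m (m + Suc s) (\<lambda>z. det (Amat m (Suc s) h z)) = (\<lambda>z. \<Sum>i<S. RESR m (m+S) (T i) z)"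
    using R by (simp add: S_def)
  also have "\<dots> = (\<lambda>z. - h 0 0 * C)"
  proof
    fix z
    have "(\<Sum>i<S. RESR m (m+S) (T i) z) = RESR m (m+S) (T 0) z + (\<Sum>i<s. RESR m (m+S) (T (Suc i)) z)"
      unfolding S_def by (rule sum.lessThan_Suc_shift)
    also have "(\<Sum>i<s. RESR m (m+S) (T (Suc i)) z) = 0"
      using Ti by (simp add: S_def)
    finally show "(\<Sum>i<S. RESR m (m+S) (T i) z) = - h 0 0 * C" by (simp add: T0R)
  qed
  also have "\<dots> = (\<lambda>z. (-1) ^ Suc s * (\<Prod>i<Suc s. h i 0))"
    unfolding C_def h'_def prod.lessThan_Suc_shift[of "\<lambda>i. h i 0"] by (simp add: mult_ac)
  finally show ?case .
qed

lemma det_sep0: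
  assumes one: "\<And>v. P v (\<lambda>_. 1)" and v0: "v0 + n \<le> K"
    and E: "\<And>i j. i < n \<Longrightarrow> j < n \<Longrightarrow> P (v0+1+j) (E i j)"
  shows "sep P K (\<lambda>z. a * det (mat n n (\<lambda>(i,j). E i j (z (v0+1+j)))))"
proof -
  define G where "G p v = (if v0 < v \<and> v \<le> v0 + n then E (inv_into UNIV p (v - v0 - 1)) (v - v0 - 1) else (\<lambda>_. 1))" for p :: "nat \<Rightarrow> nat" and v
  have detexp: "det (mat n n (\<lambda>(i,j). E i j (z (v0+1+j)))) =
      (\<Sum>p\<in>{p. p permutes {0..<n}}. signof p * (\<Prod>i=0..<n. E i (p i) (z (v0+1+p i))))" for z
  proof -
    have "det (mat n n (\<lambda>(i,j). E i j (z (v0+1+j)))) =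
      (\<Sum>p\<in>{p. p permutes {0..<n}}. signof p * (\<Prod>i=0..<n. mat n n (\<lambda>(i,j). E i j (z (v0+1+j))) $$ (i, p i)))"
      by (rule det_def') auto
    also have "\<dots> = (\<Sum>p\<in>{p. p permutes {0..<n}}. signof p * (\<Prod>i=0..<n. E i (p i) (z (v0+1+p i))))"
    proof (intro sum.cong refl arg_cong2[where f="(*)"] prod.cong)
      fix p i assume p: "p \<in> {p. p permutes {0..<n}}" and i: "i \<in> {0..<n}"
      have "p i < n" using permutes_in_image[of p "{0..<n}" i] p i by auto
      then show "mat n n (\<lambda>(i,j). E i j (z (v0+1+j))) $$ (i, p i) = E i (p i) (z (v0+1+p i))"
        using i by simp
    qed
    finally show ?thesis .
  qed
  have prodG: "(\<Prod>v=1..K. G p v (z v)) = (\<Prod>i=0..<n. E i (p i) (z (v0+1+p i)))"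
    if p: "p permutes {0..<n}" for p z
  proof -
    have "(\<Prod>v=1..K. G p v (z v)) = (\<Prod>v\<in>{v0+1..v0+n}. G p v (z v))"
      by (rule prod.mono_neutral_right) (use v0 in \<open>auto simp: G_def\<close>)
    also have "{v0+1..v0+n} = (\<lambda>j. v0+1+j) ` {0..<n}"
    proof -
      have "x \<in> (\<lambda>j. v0+1+j) ` {0..<n}" if "x \<in> {v0+1..v0+n}" for x
        using that by (intro image_eqI[of _ _ "x - v0 - 1"]) auto
      then show ?thesis by auto
    qed
    also have "(\<Prod>v\<in>(\<lambda>j. v0+1+j) ` {0..<n}. G p v (z v)) = (\<Prod>j=0..<n. G p (v0+1+j) (z (v0+1+j)))"
      by (subst prod.reindex) (auto simp: inj_on_def)
    also have "\<dots> = (\<Prod>j=0..<n. E (inv_into UNIV p j) j (z (v0+1+j)))"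
      by (intro prod.cong refl) (auto simp: G_def)
    also have "\<dots> = (\<Prod>i=0..<n. E (inv_into UNIV p (p i)) (p i) (z (v0+1+p i)))"
      using prod.permute[OF p, of "\<lambda>j. E (inv_into UNIV p j) j (z (v0+1+j))"] by (simp add: comp_def)
    also have "\<dots> = (\<Prod>i=0..<n. E i (p i) (z (v0+1+p i)))"
      using permutes_inverses(2)[OF p] by simp
    finally show ?thesis .
  qed
  have "sep P K (\<lambda>z. \<Sum>p\<in>{p. p permutes {0..<n}}. (a * signof p) * (\<Prod>v=1..K. G p v (z v)))"
  proof (rule sep_sum)
    show "finite {p. p permutes {0..<n}}" by (rule finite_permutations) simp
  next
    fix p assume p: "p \<in> {p. p permutes {0..<n}}"
    show "sep P K (\<lambda>z. (a * signof p) * (\<Prod>v=1..K. G p v (z v)))"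
    proof (rule sep.prod)
      fix v assume v: "v \<in> {1..K}"
      show "P v (G p v)"
      proof (cases "v0 < v \<and> v \<le> v0 + n")
        case True
        have ip: "inv_into UNIV p permutes {0..<n}" using p by (simp add: permutes_inv)
        have "inv_into UNIV p (v - v0 - 1) < n" using permutes_in_image[OF ip, of "v - v0 - 1"] True by auto
        moreover have "v0 + 1 + (v - v0 - 1) = v" using True by auto
        ultimately show ?thesis using E[of "inv_into UNIV p (v - v0 - 1)" "v - v0 - 1"] True
          by (auto simp: G_def)
      next
        case False
        then show ?thesis by (auto simp: G_def one)
      qed
    qed
  qed
  also have "(\<lambda>z. \<Sum>p\<in>{p. p permutes {0..<n}}. (a * signof p) * (\<Prod>v=1..K. G p v (z v))) =
      (\<lambda>z. a * det (mat n n (\<lambda>(i,j). E i j (z (v0+1+j)))))"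
  proof
    fix z
    show "(\<Sum>p\<in>{p. p permutes {0..<n}}. (a * signof p) * (\<Prod>v=1..K. G p v (z v))) =
      a * det (mat n n (\<lambda>(i,j). E i j (z (v0+1+j))))"
      unfolding detexp sum_distrib_left
    proof (intro sum.cong refl)
      fix p assume "p \<in> {p. p permutes {0..<n}}"
      then have "(\<Prod>v=1..K. G p v (z v)) = (\<Prod>i=0..<n. E i (p i) (z (v0+1+p i)))"
        by (intro prodG) auto
      then show "a * signof p * (\<Prod>v=1..K. G p v (z v)) =
          a * (signof p * (\<Prod>i=0..<n. E i (p i) (z (v0+1+p i))))"
        by (simp only: mult_ac)
    qed
  qed
  finally show ?thesis .
qed

lemma det_colscale:
  "det (mat n n (\<lambda>(i,j). f i j * d j)) = (\<Prod>j<n. d j) * det (mat n n (\<lambda>(i,j). f i j))"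
proof -
  have "det (mat n n (\<lambda>(i,j). f i j * d j)) =
      (\<Sum>p\<in>{p. p permutes {0..<n}}. signof p * (\<Prod>i=0..<n. mat n n (\<lambda>(i,j). f i j * d j) $$ (i, p i)))"
    by (rule det_def') auto
  also have "\<dots> = (\<Sum>p\<in>{p. p permutes {0..<n}}. (\<Prod>j<n. d j) * (signof p * (\<Prod>i=0..<n. mat n n (\<lambda>(i,j). f i j) $$ (i, p i))))"
  proof (intro sum.cong refl)
    fix p assume p: "p \<in> {p. p permutes {0..<n}}"
    have pi: "p i < n" if "i < n" for i using permutes_in_image[of p "{0..<n}" i] p that by auto
    have "(\<Prod>i=0..<n. mat n n (\<lambda>(i,j). f i j * d j) $$ (i, p i)) = (\<Prod>i=0..<n. f i (p i) * d (p i))"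
      by (intro prod.cong refl) (auto simp: pi)
    also have "\<dots> = (\<Prod>i=0..<n. f i (p i)) * (\<Prod>i=0..<n. d (p i))" by (rule prod.distrib)
    also have "(\<Prod>i=0..<n. d (p i)) = (\<Prod>j=0..<n. d j)"
      using prod.permute[of p "{0..<n}" d] p by (simp add: comp_def)
    also have "(\<Prod>i=0..<n. f i (p i)) = (\<Prod>i=0..<n. mat n n (\<lambda>(i,j). f i j) $$ (i, p i))"
      by (intro prod.cong refl) (auto simp: pi)
    finally show "signof p * (\<Prod>i=0..<n. mat n n (\<lambda>(i,j). f i j * d j) $$ (i, p i)) =
        (\<Prod>j<n. d j) * (signof p * (\<Prod>i=0..<n. mat n n (\<lambda>(i,j). f i j) $$ (i, p i)))"
      by (simp add: atLeast0LessThan mult_ac)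
  qed
  also have "\<dots> = (\<Prod>j<n. d j) * det (mat n n (\<lambda>(i,j). f i j))"
    by (subst det_def'[of _ n]) (auto simp: sum_distrib_left)
  finally show ?thesis .
qed

lemma hN_holo: "hN n holomorphic_on UNIV"
proof -
  have "(\<lambda>x. \<Sum>r = 1..n. Hcoef n r * x ^ (r - 1)) holomorphic_on UNIV" by (intro holomorphic_intros)
  then show ?thesis by (simp add: hN_def[abs_def])
qed

lemma Jfun_eq:
  fixes z :: "nat \<Rightarrow> complex"
  assumes z1: "\<forall>i\<in>{1..s}. z i \<noteq> 0 \<and> z i \<noteq> 1"
    and z2: "\<forall>i\<in>{1..s}. \<forall>j\<in>{1..s}. i \<noteq> j \<longrightarrow> z i \<noteq> z j"
  shows "Jfun N s z = cross s z * det (Amat 0 s (\<lambda>i. hN (N - i)) z)"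
proof -
  define h where "h = (\<lambda>i. hN (N - i))"
  define V where "V = (\<Prod>i = 1..s. \<Prod>j = i+1..s. (z i - z j))"
  define M where "M = mat s s (\<lambda>(i, j). (z (j+1) - 1) ^ (s - (i+1)) * z (j+1) ^ i * hN (N - i) (z (j+1)))"
  define d where "d j = 1 / (z (j+1) ^ (j+1) * (z (j+1) - 1) ^ (s - j))" for j
  define P1 where "P1 = (\<Prod>j = 1..s. z j ^ (s - j) / (z j ^ s * (z j - 1) ^ (s - j + 1)))"
  have V0: "V \<noteq> 0" unfolding V_def using z2 by (auto simp: prod_zero_iff)
  have P2: "(\<Prod>j = 1..s. \<Prod>k = j+1..s. (z j - z k) / (1 - z k + z j * z k)) = V * cross s z"
    unfolding V_def cross_def cf_def by (simp add: prod.distrib[symmetric])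
  have hNs: "hNs N s z = det M / V"
    unfolding hNs_def M_def V_def by simp
  have A: "Amat 0 s h z = mat s s (\<lambda>(i,j). (z (j+1) - 1) ^ (s - (i+1)) * z (j+1) ^ i * hN (N - i) (z (j+1)) * d j)"
    unfolding Amat_def h_def d_def Ent_def by (intro cong_mat) (auto simp: diff_diff_left)
  have detA: "det (Amat 0 s h z) = (\<Prod>j<s. d j) * det M"
    unfolding A M_def by (rule det_colscale)
  have P1d: "P1 = (\<Prod>j<s. d j)"
  proof -
    have "P1 = (\<Prod>j<s. z (Suc j) ^ (s - Suc j) / (z (Suc j) ^ s * (z (Suc j) - 1) ^ (s - Suc j + 1)))"
      unfolding P1_def by (simp add: prod.atLeast1_atMost_eq)
    also have "\<dots> = (\<Prod>j<s. d j)"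
    proof (intro prod.cong refl)
      fix j assume j: "j \<in> {..<s}"
      have x0: "z (Suc j) \<noteq> 0" "z (Suc j) - 1 \<noteq> 0" using z1 j by auto
      have e1: "s - Suc j + 1 = s - j" using j by auto
      have e2: "z (Suc j) ^ s = z (Suc j) ^ (s - Suc j) * z (Suc j) ^ (j+1)"
      proof -
        have "s = (s - Suc j) + (j+1)" using j by auto
        then show ?thesis by (metis power_add)
      qed
      show "z (Suc j) ^ (s - Suc j) / (z (Suc j) ^ s * (z (Suc j) - 1) ^ (s - Suc j + 1)) = d j"
        unfolding d_def e1 e2 using x0 by (simp add: field_simps)
    qed
    finally show ?thesis .
  qed
  have "Jfun N s z = P1 * (V * cross s z) * (det M / V)"
    unfolding Jfun_def P1_def[symmetric] P2 hNs ..
  also have "\<dots> = cross s z * (P1 * det M)" using V0 by (simp add: field_simps)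
  also have "P1 * det M = det (Amat 0 s h z)" by (simp add: detA P1d)
  finally show ?thesis by (simp add: h_def)
qed

theorem lemma2:
  fixes N s :: nat
  assumes "1 \<le> N" and "1 \<le> s" and "s \<le> N"
  shows "ires s (Jfun N s) (\<lambda>_. 0) = (-1) ^ s * (\<Prod>i = 0..<s. hN (N - i) 0)"
proof -
  define h where "h = (\<lambda>i. hN (N - i))"
  have hol: "\<And>i. h i holomorphic_on UNIV" unfolding h_def by (rule hN_holo)
  have "ires s (Jfun N s) = ires s (\<lambda>z. cross s z * det (Amat 0 s h z))"
    by (rule ires_cong) (simp add: Jfun_eq h_def)
  also have "\<dots> = iresR 0 s (\<lambda>z. cross s z * det (Amat 0 s h z))" by (rule ires_iresR)
  also have sepA: "sep (\<lambda>j g. good s g) s (\<lambda>z. det (Amat 0 s h z))"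
  proof -
    have "sep (\<lambda>j g. good s g) s (\<lambda>z. 1 * det (mat s s (\<lambda>(i,j). Ent s h i j (z (0+1+j)))))"
    proof (rule det_sep0)
      fix i j assume "i < s" "j < s"
      then show "good s (Ent s h i j)" by (intro good_Ent hol) auto
    qed (auto simp: good_one)
    then show ?thesis by (simp add: Amat_def)
  qed
  then have "iresR 0 s (\<lambda>z. cross s z * det (Amat 0 s h z)) = (\<lambda>z. cross 0 z * RESR 0 s (\<lambda>z. det (Amat 0 s h z)) z)"
    by (intro iresR_cross[OF okP_Pg]) auto
  also have "\<dots> = (\<lambda>z. (-1)^s * (\<Prod>i<s. h i 0))"
    using GC[OF hol, of 0 s] by (simp add: cross_def)
  finally show ?thesis by (simp add: h_def atLeast0LessThan)
qed

end
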